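(* Let $\Omega=(\alpha,\beta)\subset\mathbb{R}$ with a (not necessarily uniform) subdivision $\alpha=a_0<a_1<\dots<a_n=\beta$, intervals $\mathcal{I}_k=(a_{k-1},a_k)$ and $h_k=a_k-a_{k-1}$, $k=1,\dots,n$. Let $a(x,\eta,\xi)=A(x,\eta,\xi)\xi$ and $b(x,\eta)$ satisfy the standing assumptions listed in the context (with constants $\gamma_a>0$, $K_\eta>0$, $B_\eta\ge 0$). Consider either (M) the mixed problem: $\mathcal{V}$ is the space of continuous piecewise linear functions on the subdivision vanishing at $x=\beta$, and a given number $\psi(\alpha)\in\mathbb{R}$; a subsolution is $u_1\in\mathcal{V}$ with $\int_\Omega a(x,u_1,u_1')v'+b(x,u_1)v\,dx\le \psi(\alpha)v(\alpha)$ for all $v\in\mathcal{V}^+$, and a supersolution is $u_2\in\mathcal{V}$ with $\int_\Omega a(x,u_2,u_2')v'+b(x,u_2)v\,dx\ge \psi(\alpha)v(\alpha)$ for all $v\in\mathcal{V}^+$; or (D) the Dirichlet problem: $\mathcal{V}$ is the space of continuous piecewise linear functions on the subdivision vanishing at $x=\alpha$ and $x=\beta$; a subsolution (resp. supersolution) is $u_1\in\mathcal{V}$ (resp. $u_2\in\mathcal V$) with $\int_\Omega a(x,u_1,u_1')v'+b(x,u_1)v\,dx\le 0$ (resp. $\int_\Omega a(x,u_2,u_2')v'+b(x,u_2)v\,dx\ge 0$) for all $v\in\mathcal{V}^+$, where $\mathcal{V}^+=\{v\in\mathcal{V}: v\ge 0\}$. Let $u_1$ be a subsolution and $u_2$ a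 supersolution of the same problem. If $$\max_{1\le k\le n}\left\{|u_2(a_k)-u_2(a_{k-1})|+\frac{B_\eta}{K_\eta}h_k^2\right\}<\frac{2\gamma_a}{K_\eta},$$ then $u_1\le u_2$ in $\Omega$.
   Context: Standing assumptions (with $d=1$): $A:\Omega\times\mathbb{R}\times\mathbb{R}\to\mathbb{R}$ and $b:\Omega\times\mathbb{R}\to\mathbb{R}$, $a(x,\eta,\xi)=A(x,\eta,\xi)\xi$. The functions $a(x,\eta,\xi)$ and $b(x,\eta)$ are Carathéodory functions, $C^1$ in $(\eta,\xi)$ (resp. in $\eta$) for a.e. $x\in\Omega$ and measurable in $x$ for each fixed $(\eta,\xi)$ (resp. $\eta$). There are constants $\gamma_a>0$, $K_\eta>0$, $B_\eta\ge0$ such that for a.e. $x\in\Omega$ and all $\eta\in\mathbb{R}$, $\xi\in\mathbb{R}^d$, $\zeta\in\mathbb{R}^d$: $\sum_{i,j=1}^d \frac{\partial a_i}{\partial\xi_j}(x,\eta,\xi)\zeta_i\zeta_j\ge\gamma_a|\zeta|^2$ (where $a_i=A\xi_i$); $\left|\frac{\partial A}{\partial\eta}(x,\eta,\xi)\right|\le K_\eta$; and $0\le\frac{\partial b}{\partial\eta}(x,\eta)\le B_\eta$. *)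

theory Defs
  imports "HOL-Analysis.Analysis"
begin

definition subdivision :: "(nat \<Rightarrow> real) \<Rightarrow> nat \<Rightarrow> real \<Rightarrow> real \<Rightarrow> bool" where
  "subdivision t n \<alpha> \<beta> \<longleftrightarrow> 1 \<le> n \<and> t 0 = \<alpha> \<and> t n = \<beta> \<and> (\<forall>k\<in>{1..n}. t (k - 1) < t k)"

definition pw_linear :: "(nat \<Rightarrow> real) \<Rightarrow> nat \<Rightarrow> (real \<Rightarrow> real) \<Rightarrow> bool" where
  "pw_linear t n v \<longleftrightarrow> continuous_on {t 0..t n} v \<and>
     (\<forall>k\<in>{1..n}. \<exists>c d. \<forall>x\<in>{t (k - 1)..t k}. v x = c + d * x)"

text \<open>The finite element space: vanishing at beta (mixed problem), and additionally
  at alpha when dirichlet = True (Dirichlet problem).\<close>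
definition FEspace :: "bool \<Rightarrow> (nat \<Rightarrow> real) \<Rightarrow> nat \<Rightarrow> (real \<Rightarrow> real) set" where
  "FEspace dirichlet t n = {v. pw_linear t n v \<and> v (t n) = 0 \<and> (dirichlet \<longrightarrow> v (t 0) = 0)}"

definition FEspace_plus :: "bool \<Rightarrow> (nat \<Rightarrow> real) \<Rightarrow> nat \<Rightarrow> (real \<Rightarrow> real) set" where
  "FEspace_plus dirichlet t n = {v \<in> FEspace dirichlet t n. \<forall>x\<in>{t 0..t n}. 0 \<le> v x}"

definition integrand ::
  "(real \<Rightarrow> real \<Rightarrow> real \<Rightarrow> real) \<Rightarrow> (real \<Rightarrow> real \<Rightarrow> real) \<Rightarrow> (real \<Rightarrow> real) \<Rightarrow> (real \<Rightarrow> real) \<Rightarrow> real \<Rightarrow> real" where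
  "integrand A b u v x = A x (u x) (deriv u x) * deriv u x * deriv v x + b x (u x) * v x"

definition rhs :: "bool \<Rightarrow> (nat \<Rightarrow> real) \<Rightarrow> real \<Rightarrow> (real \<Rightarrow> real) \<Rightarrow> real" where
  "rhs dirichlet t \<psi>\<alpha> v = (if dirichlet then 0 else \<psi>\<alpha> * v (t 0))"

definition subsolution where
  "subsolution dirichlet t n A b \<psi>\<alpha> u \<longleftrightarrow> u \<in> FEspace dirichlet t n \<and>
     (\<forall>v\<in>FEspace_plus dirichlet t n.
        set_integrable lborel {t 0<..<t n} (integrand A b u v) \<and>
        (LINT x:{t 0<..<t n}|lborel. integrand A b u v x) \<le> rhs dirichlet t \<psi>\<alpha> v)"

definition supersolution where
  "supersolution dirichlet t n A b \<psi>\<alpha> u \<longleftrightarrow> u \<in> FEspace dirichlet t n \<and>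
     (\<forall>v\<in>FEspace_plus dirichlet t n.
        set_integrable lborel {t 0<..<t n} (integrand A b u v) \<and>
        (LINT x:{t 0<..<t n}|lborel. integrand A b u v x) \<ge> rhs dirichlet t \<psi>\<alpha> v)"

end

theory Submission
  imports Defs
begin


lemma mvt_lower:
  fixes f f' :: "real \<Rightarrow> real"
  assumes "x1 \<le> x2" "\<And>y. (f has_real_derivative f' y) (at y)" "\<And>y. c \<le> f' y"
  shows "f x2 - f x1 \<ge> c * (x2 - x1)"
proof (cases "x1 = x2")
  case False
  then have "x1 < x2" using assms(1) by simp
  from MVT2[OF this, of f f'] assms(2) obtain z where "f x2 - f x1 = (x2 - x1) * f' z" by blast
  moreover have "(x2 - x1) * c \<le> (x2 - x1) * f' z" using assms(3)[of z] \<open>x1 < x2\<close> by (intro mult_left_mono) auto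
  ultimately show ?thesis by (simp add: mult.commute)
qed simp

lemma mvt_upper:
  fixes f f' :: "real \<Rightarrow> real"
  assumes "x1 \<le> x2" "\<And>y. (f has_real_derivative f' y) (at y)" "\<And>y. f' y \<le> c"
  shows "f x2 - f x1 \<le> c * (x2 - x1)"
proof -
  have "\<And>y. ((\<lambda>y. - f y) has_real_derivative - f' y) (at y)"
    using assms(2) by (auto intro!: derivative_eq_intros)
  from mvt_lower[of x1 x2 "\<lambda>y. - f y" "\<lambda>y. - f' y" "-c", OF assms(1) this] assms(3)
  show ?thesis by force
qed

lemma lip_abs:
  fixes f f' :: "real \<Rightarrow> real"
  assumes "\<And>y. (f has_real_derivative f' y) (at y)" "\<And>y. \<bar>f' y\<bar> \<le> c"
  shows "\<bar>f x1 - f x2\<bar> \<le> c * \<bar>x1 - x2\<bar>"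
proof -
  have lo: "\<And>y. - c \<le> f' y" and up: "\<And>y. f' y \<le> c" using assms(2) by (smt (verit))+
  show ?thesis
  proof (cases "x1 \<le> x2")
    case True
    from mvt_lower[OF True assms(1) lo] mvt_upper[OF True assms(1) up] True show ?thesis
      by (auto simp: abs_if algebra_simps)
  next
    case False
    then have F: "x2 \<le> x1" by simp
    from mvt_lower[OF F assms(1) lo] mvt_upper[OF F assms(1) up] F show ?thesis
      by (auto simp: abs_if algebra_simps)
  qed
qed

lemma partial_xi:
  fixes F :: "real \<Rightarrow> real \<Rightarrow> real"
  assumes "((\<lambda>p. F (fst p) (snd p)) has_derivative (\<lambda>h. D1 * fst h + D2 * snd h)) (at (\<eta>, \<xi>))"
  shows "((\<lambda>e. F \<eta> e) has_real_derivative D2) (at \<xi>)"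
proof -
  have i: "((\<lambda>e. (\<eta>, e)) has_derivative (\<lambda>h. (0, h))) (at \<xi>)"
    by (auto intro!: derivative_eq_intros)
  have "((\<lambda>e. (\<lambda>p. F (fst p) (snd p)) ((\<lambda>e. (\<eta>, e)) e)) has_derivative
      (\<lambda>x. (\<lambda>h. D1 * fst h + D2 * snd h) ((\<lambda>h. (0::real, h)) x))) (at \<xi>)"
    by (rule has_derivative_compose[OF i]) (use assms in simp)
  then have "((\<lambda>e. F \<eta> e) has_derivative (\<lambda>h. D2 * h)) (at \<xi>)" by simp
  then show ?thesis unfolding has_field_derivative_def by simp
qed

lemma reg_pt:
  fixes A :: "real \<Rightarrow> real \<Rightarrow> real \<Rightarrow> real" and b :: "real \<Rightarrow> real \<Rightarrow> real"
  assumes Ha: "\<forall>\<eta> \<xi>. ((\<lambda>p. A x (fst p) (snd p) * snd p) has_derivative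
                    (\<lambda>h. a_eta x \<eta> \<xi> * fst h + a_xi x \<eta> \<xi> * snd h)) (at (\<eta>, \<xi>))"
    and Hxi: "\<forall>\<eta> \<xi> \<zeta>. a_xi x \<eta> \<xi> * \<zeta> * \<zeta> \<ge> \<gamma>a * \<zeta>\<^sup>2"
    and HA: "\<forall>\<eta> \<xi>. ((\<lambda>e. A x e \<xi>) has_real_derivative A_eta x \<eta> \<xi>) (at \<eta>)
                 \<and> \<bar>A_eta x \<eta> \<xi>\<bar> \<le> K\<eta>"
    and Hb: "\<forall>\<eta>. ((\<lambda>e. b x e) has_real_derivative b_eta x \<eta>) (at \<eta>)"
    and Hb2: "\<forall>\<eta>. 0 \<le> b_eta x \<eta> \<and> b_eta x \<eta> \<le> B\<eta>"
  shows "\<And>\<eta> \<xi>1 \<xi>2. \<xi>2 \<le> \<xi>1 \<Longrightarrow> A x \<eta> \<xi>1 * \<xi>1 - A x \<eta> \<xi>2 * \<xi>2 \<ge> \<gamma>a * (\<xi>1 - \<xi>2)"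
    and "\<And>\<eta>1 \<eta>2 \<xi>. \<bar>A x \<eta>1 \<xi> - A x \<eta>2 \<xi>\<bar> \<le> K\<eta> * \<bar>\<eta>1 - \<eta>2\<bar>"
    and "\<And>\<eta>1 \<eta>2. \<eta>2 \<le> \<eta>1 \<Longrightarrow> b x \<eta>2 \<le> b x \<eta>1"
    and "\<And>\<eta>1 \<eta>2. \<eta>1 \<le> \<eta>2 \<Longrightarrow> b x \<eta>1 - b x \<eta>2 \<ge> B\<eta> * (\<eta>1 - \<eta>2)"
proof -
  fix \<eta> \<xi>1 \<xi>2 :: real assume le: "\<xi>2 \<le> \<xi>1"
  have d: "\<And>y. ((\<lambda>e. A x \<eta> e * e) has_real_derivative a_xi x \<eta> y) (at y)"
    using partial_xi[of "\<lambda>e f. A x e f * f"] Ha by blast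
  have c: "\<And>y. \<gamma>a \<le> a_xi x \<eta> y" using Hxi by (metis mult_1_right power_one)
  from mvt_lower[OF le d c] show "A x \<eta> \<xi>1 * \<xi>1 - A x \<eta> \<xi>2 * \<xi>2 \<ge> \<gamma>a * (\<xi>1 - \<xi>2)" .
next
  fix \<eta>1 \<eta>2 \<xi> :: real
  show "\<bar>A x \<eta>1 \<xi> - A x \<eta>2 \<xi>\<bar> \<le> K\<eta> * \<bar>\<eta>1 - \<eta>2\<bar>"
    by (rule lip_abs[of "\<lambda>e. A x e \<xi>" "\<lambda>e. A_eta x e \<xi>"]) (use HA in auto)
next
  fix \<eta>1 \<eta>2 :: real assume le: "\<eta>2 \<le> \<eta>1"
  from mvt_lower[OF le, of "\<lambda>e. b x e" "b_eta x" 0] Hb Hb2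
  show "b x \<eta>2 \<le> b x \<eta>1" by auto
next
  fix \<eta>1 \<eta>2 :: real assume le: "\<eta>1 \<le> \<eta>2"
  from mvt_upper[OF le, of "\<lambda>e. b x e" "b_eta x" B\<eta>] Hb Hb2
  show "b x \<eta>1 - b x \<eta>2 \<ge> B\<eta> * (\<eta>1 - \<eta>2)" by (auto simp: algebra_simps)
qed

lemma pt_est:
  fixes AA :: "real \<Rightarrow> real \<Rightarrow> real" and bb :: "real \<Rightarrow> real"
  assumes amono: "\<And>\<eta> \<xi>1 \<xi>2. \<xi>2 \<le> \<xi>1 \<Longrightarrow> AA \<eta> \<xi>1 * \<xi>1 - AA \<eta> \<xi>2 * \<xi>2 \<ge> \<gamma> * (\<xi>1 - \<xi>2)"
    and Alip: "\<And>\<eta>1 \<eta>2 \<xi>. \<bar>AA \<eta>1 \<xi> - AA \<eta>2 \<xi>\<bar> \<le> K * \<bar>\<eta>1 - \<eta>2\<bar>"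
    and bmono: "\<And>\<eta>1 \<eta>2. \<eta>2 \<le> \<eta>1 \<Longrightarrow> bb \<eta>2 \<le> bb \<eta>1"
    and bmono2: "\<And>\<eta>1 \<eta>2. \<eta>1 \<le> \<eta>2 \<Longrightarrow> bb \<eta>1 - bb \<eta>2 \<ge> B * (\<eta>1 - \<eta>2)"
    and h: "h > 0" and s: "0 \<le> s" "s \<le> 1" and sg: "\<sigma> = 1 \<or> \<sigma> = -1"
    and m: "m \<ge> 0" and wp: "wp > 0" and e: "e1 - e2 = -(1-s)*m + s*wp"
    and d: "d1 - d2 = \<sigma>*(m+wp)/h" and B: "B \<ge> 0" and K: "K \<ge> 0"
  shows "(AA e1 d1 * d1 - AA e2 d2 * d2) * (\<sigma>/h) + (bb e1 - bb e2) * s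
     \<ge> (\<gamma>*(m+wp)/h - K*\<bar>d2\<bar>*((1-s)*m + s*wp))/h - B*(m+wp)/4"
proof -
  define T1 where "T1 = (AA e1 d1 * d1 - AA e1 d2 * d2)*(\<sigma>/h)"
  define T2 where "T2 = (AA e1 d2 - AA e2 d2)*d2*(\<sigma>/h)"
  define T3 where "T3 = (bb e1 - bb e2) * s"
  have eq: "(AA e1 d1 * d1 - AA e2 d2 * d2) * (\<sigma>/h) + (bb e1 - bb e2) * s = T1 + T2 + T3"
    unfolding T1_def T2_def T3_def by (simp add: algebra_simps)
  have pos: "(m+wp)/h > 0" using m wp h by simp
  have T1: "T1 \<ge> \<gamma>*(m+wp)/h/h"
    using sg
  proof
    assume "\<sigma> = 1"
    then have "d2 \<le> d1" "d1 - d2 = (m+wp)/h" using d pos by auto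
    from amono[OF this(1), of e1] this(2) have "AA e1 d1 * d1 - AA e1 d2 * d2 \<ge> \<gamma>*(m+wp)/h" by simp
    from divide_right_mono[OF this, of h] h show ?thesis unfolding T1_def using \<open>\<sigma> = 1\<close> by simp
  next
    assume "\<sigma> = -1"
    then have "d1 - d2 = - ((m+wp)/h)" using d by (simp add: minus_divide_left)
    then have "d1 \<le> d2" "d2 - d1 = (m+wp)/h" using pos by auto
    from amono[OF this(1), of e1] this(2) have "AA e1 d2 * d2 - AA e1 d1 * d1 \<ge> \<gamma>*(m+wp)/h" by simp
    have eqm: "(AA e1 d1 * d1 - AA e1 d2 * d2)*(-1/h) = (AA e1 d2 * d2 - AA e1 d1 * d1)/h"
      by (simp add: algebra_simps diff_divide_distrib)
    from divide_right_mono[OF \<open>AA e1 d2 * d2 - AA e1 d1 * d1 \<ge> \<gamma>*(m+wp)/h\<close>, of h] h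
    show ?thesis unfolding T1_def using \<open>\<sigma> = -1\<close> eqm by simp
  qed
  have nn1: "0 \<le> (1-s)*m" and nn2: "0 \<le> s*wp" using s m wp by simp_all
  have ew: "\<bar>e1 - e2\<bar> \<le> (1-s)*m + s*wp" unfolding e abs_le_iff
    using nn1 nn2 by (simp add: algebra_simps)
  have "\<bar>T2\<bar> = \<bar>AA e1 d2 - AA e2 d2\<bar> * \<bar>d2\<bar> / h" unfolding T2_def using sg h
    by (auto simp: abs_mult)
  also have "\<dots> \<le> K * ((1-s)*m + s*wp) * \<bar>d2\<bar> / h"
  proof -
    have "\<bar>AA e1 d2 - AA e2 d2\<bar> \<le> K * ((1-s)*m + s*wp)"
    proof -
      have "\<bar>AA e1 d2 - AA e2 d2\<bar> \<le> K * \<bar>e1 - e2\<bar>" by (rule Alip)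
      also have "\<dots> \<le> K * ((1-s)*m + s*wp)" using ew K by (rule mult_left_mono)
      finally show ?thesis .
    qed
    then show ?thesis using h by (intro divide_right_mono mult_right_mono) auto
  qed
  finally have T2a: "\<bar>T2\<bar> \<le> K * ((1-s)*m + s*wp) * \<bar>d2\<bar> / h" .
  have eqT: "- (K*\<bar>d2\<bar>*((1-s)*m + s*wp))/h = - (K * ((1-s)*m + s*wp) * \<bar>d2\<bar> / h)"
    by (simp add: ac_simps)
  have T2: "T2 \<ge> - (K*\<bar>d2\<bar>*((1-s)*m + s*wp))/h"
    unfolding eqT using T2a abs_ge_minus_self[of T2] by linarith
  have T3: "T3 \<ge> - B*(m+wp)/4"
  proof (cases "e2 \<le> e1")
    case True
    then have "bb e1 - bb e2 \<ge> 0" using bmono by simp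
    then have "T3 \<ge> 0" unfolding T3_def using s by simp
    moreover have "0 \<le> B*(m+wp)/4" using B m wp by simp
    ultimately show ?thesis by linarith
  next
    case False
    then have b1: "bb e1 - bb e2 \<ge> B * (e1 - e2)" using bmono2 by simp
    have "e1 - e2 \<ge> -(1-s)*m" using e nn2 by simp
    then have "B * (e1 - e2) \<ge> B * (-(1-s)*m)" using B by (rule mult_left_mono)
    then have "B * (e1 - e2) \<ge> - B*(1-s)*m" by (simp add: algebra_simps)
    with b1 have b2: "bb e1 - bb e2 \<ge> - B*(1-s)*m" by simp
    have "- B*(1-s)*m * s \<le> T3" unfolding T3_def using mult_right_mono[OF b2 s(1)] by simp
    moreover have "(1-s) * s \<le> 1/4"
    proof -
      have "0 \<le> (s - 1/2)^2" by simp
      then show ?thesis by (simp add: power2_eq_square algebra_simps)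
    qed
    then have "B*m*((1-s) * s) \<le> B*m*(1/4)" using B m by (intro mult_left_mono) auto
    moreover have "B*m \<le> B*(m+wp)" using B wp by (intro mult_left_mono) auto
    ultimately show ?thesis by (simp add: algebra_simps)
  qed
  have "\<gamma>*(m+wp)/h/h - (K*\<bar>d2\<bar>*((1-s)*m + s*wp))/h - B*(m+wp)/4
      = (\<gamma>*(m+wp)/h - K*\<bar>d2\<bar>*((1-s)*m + s*wp))/h - B*(m+wp)/4"
    by (simp add: diff_divide_distrib)
  with eq T1 T2 T3 show ?thesis by linarith
qed


lemma int_shape:
  fixes a b h ca cb cc m wp :: real
  assumes ab: "a < b" and hdef: "h = b - a"
  shows "set_integrable lborel {a<..<b} (\<lambda>x. (ca - cb*((1 - (x-a)/h)*m + (x-a)/h*wp))/h - cc)"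
    "(LINT x:{a<..<b}|lborel. (ca - cb*((1 - (x-a)/h)*m + (x-a)/h*wp))/h - cc)
       = ca - cb*(m+wp)/2 - cc*h"
proof -
  have h: "h > 0" using ab hdef by simp
  define P where "P = (ca - cb*m)/h - cc"
  define Q where "Q = - cb*(wp - m)/h^2"
  have feq: "\<And>x. (ca - cb*((1 - (x-a)/h)*m + (x-a)/h*wp))/h - cc = P + Q*(x-a)"
    unfolding P_def Q_def using h by (simp add: field_simps power2_eq_square)
  have cont: "continuous_on {a..b} (\<lambda>x. P + Q*(x-a))" by (intro continuous_intros)
  show "set_integrable lborel {a<..<b} (\<lambda>x. (ca - cb*((1 - (x-a)/h)*m + (x-a)/h*wp))/h - cc)"
    unfolding feq by (rule set_integrable_subset[OF borel_integrable_atLeastAtMost'[OF cont]]) auto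
  have "(LINT x:{a<..<b}|lborel. P + Q*(x-a)) = (LBINT x=a..b. P + Q*(x-a))"
    using interval_lebesgue_integral_le_eq[of "ereal a" "ereal b" lborel "\<lambda>x. P + Q*(x-a)"] ab
    by simp
  also have "\<dots> = (P*b + Q*(b-a)^2/2) - (P*a + Q*(a-a)^2/2)"
  proof (rule interval_integral_FTC_finite)
    show "continuous_on {min a b..max a b} (\<lambda>x. P + Q*(x-a))" by (intro continuous_intros)
    fix x
    have "((\<lambda>x. P*x + Q*(x-a)^2/2) has_real_derivative P + Q*(x-a)) (at x within {min a b..max a b})"
      by (auto intro!: derivative_eq_intros simp: field_simps)
    then show "((\<lambda>x. P*x + Q*(x-a)^2/2) has_vector_derivative P + Q*(x-a)) (at x within {min a b..max a b})"
      by (simp add: has_real_derivative_iff_has_vector_derivative)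
  qed
  also have "\<dots> = ca - cb*(m+wp)/2 - cc*h"
  proof -
    have bh: "b = a + h" using hdef by simp
    show ?thesis unfolding P_def Q_def bh using h by (simp add: field_simps power2_eq_square)
  qed
  finally show "(LINT x:{a<..<b}|lborel. (ca - cb*((1 - (x-a)/h)*m + (x-a)/h*wp))/h - cc)
       = ca - cb*(m+wp)/2 - cc*h" unfolding feq .
qed

lemma pwl_elem:
  assumes "pw_linear t n u" "k \<in> {1..n}" "t (k-1) < t k" "x \<in> {t (k-1)..t k}"
  shows "u x = u (t (k-1)) + (u (t k) - u (t (k-1))) / (t k - t (k-1)) * (x - t (k-1))"
proof -
  obtain c d where cd: "\<forall>y\<in>{t (k-1)..t k}. u y = c + d * y"
    using assms(1,2) unfolding pw_linear_def by blast
  have e0: "u (t (k-1)) = c + d * t (k-1)" and e1: "u (t k) = c + d * t k" and ex: "u x = c + d * x"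
    using cd assms(3,4) by auto
  have "(u (t k) - u (t (k-1))) / (t k - t (k-1)) = d"
    unfolding e0 e1 using assms(3) by (simp add: field_simps)
  then show ?thesis unfolding ex e0 by (simp add: algebra_simps)
qed

lemma pwl_deriv:
  assumes "pw_linear t n u" "k \<in> {1..n}" "t (k-1) < t k" "x \<in> {t (k-1)<..<t k}"
  shows "deriv u x = (u (t k) - u (t (k-1))) / (t k - t (k-1))"
proof -
  define D where "D = (u (t k) - u (t (k-1))) / (t k - t (k-1))"
  have "((\<lambda>y. u (t (k-1)) + D * (y - t (k-1))) has_real_derivative D) (at x)"
    by (auto intro!: derivative_eq_intros)
  then have "(u has_real_derivative D) (at x)"
  proof (rule has_field_derivative_transform_within_open[where S="{t (k-1)<..<t k}"])
    show "open {t (k-1)<..<t k}" by simp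
    show "x \<in> {t (k-1)<..<t k}" using assms(4) .
    fix y assume "y \<in> {t (k-1)<..<t k}"
    then show "u (t (k-1)) + D * (y - t (k-1)) = u y"
      using pwl_elem[OF assms(1,2,3), of y] unfolding D_def by auto
  qed
  then show ?thesis unfolding D_def by (rule DERIV_imp_deriv)
qed


lemma elem_find:
  fixes t :: "nat \<Rightarrow> real"
  assumes "t 0 < x" "x \<le> t n"
  shows "\<exists>k. 1 \<le> k \<and> k \<le> n \<and> t (k-1) < x \<and> x \<le> t k"
proof -
  define k where "k = (LEAST k. x \<le> t k)"
  have k1: "x \<le> t k" unfolding k_def by (rule LeastI[of _ n]) (use assms in auto)
  have k2: "k \<le> n" unfolding k_def by (rule Least_le) (use assms in auto)
  have k0: "k \<noteq> 0" using k1 assms(1) by (cases k) auto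
  have "\<not> x \<le> t (k-1)" unfolding k_def
    by (rule not_less_Least) (use k0 in \<open>auto simp: k_def\<close>)
  then show ?thesis using k1 k2 k0 by (intro exI[of _ k]) auto
qed

lemma ind_sub:
  fixes f :: "real \<Rightarrow> real"
  assumes "S \<subseteq> I" "set_integrable M S f"
  shows "set_integrable M I (\<lambda>x. indicator S x * f x)"
    "(LINT x:I|M. indicator S x * f x) = (LINT x:S|M. f x)"
proof -
  have eq: "(\<lambda>x. indicator I x *\<^sub>R (indicator S x * f x)) = (\<lambda>x. indicator S x *\<^sub>R f x)"
    using assms(1) by (intro ext) (auto split: split_indicator)
  show "set_integrable M I (\<lambda>x. indicator S x * f x)"
    using assms(2) unfolding set_integrable_def eq .
  show "(LINT x:I|M. indicator S x * f x) = (LINT x:S|M. f x)"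
    unfolding set_lebesgue_integral_def eq ..
qed

lemma pos_val:
  fixes h \<Delta> K D B \<gamma> :: real
  assumes "h > 0" "\<Delta> > 0" "K*D + B*h^2 < 2*\<gamma>" "B \<ge> 0"
  shows "\<gamma>*\<Delta>/h - K*(D/h)*\<Delta>/2 - B*\<Delta>/4*h > 0"
proof -
  have "B*h^2 \<ge> 0" using assms(4) by simp
  then have g: "\<gamma> - K*D/2 - B*h^2/4 > 0" using assms(3) by linarith
  have "\<Delta>/h * (\<gamma> - K*D/2 - B*h^2/4) > 0" using g assms(1,2) by simp
  moreover have "\<gamma>*\<Delta>/h - K*(D/h)*\<Delta>/2 - B*\<Delta>/4*h = \<Delta>/h * (\<gamma> - K*D/2 - B*h^2/4)"
    using assms(1) by (simp add: field_simps power2_eq_square)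
  ultimately show ?thesis by simp
qed




theorem theorem3p1:
  fixes A :: "real \<Rightarrow> real \<Rightarrow> real \<Rightarrow> real" and b :: "real \<Rightarrow> real \<Rightarrow> real"
    and a_eta a_xi A_eta :: "real \<Rightarrow> real \<Rightarrow> real \<Rightarrow> real" and b_eta :: "real \<Rightarrow> real \<Rightarrow> real"
    and \<gamma>a K\<eta> B\<eta> \<alpha> \<beta> \<psi>\<alpha> :: real and t :: "nat \<Rightarrow> real" and n :: nat
    and dirichlet :: bool and u1 u2 :: "real \<Rightarrow> real"
  assumes subdiv: "subdivision t n \<alpha> \<beta>"
    and constants: "\<gamma>a > 0" "K\<eta> > 0" "B\<eta> \<ge> 0"
    and meas_a: "\<And>\<eta> \<xi>. (\<lambda>x. A x \<eta> \<xi> * \<xi>) \<in> borel_measurable (restrict_space lborel {\<alpha><..<\<beta>})"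
    and meas_b: "\<And>\<eta>. (\<lambda>x. b x \<eta>) \<in> borel_measurable (restrict_space lborel {\<alpha><..<\<beta>})"
    and reg: "AE x in lborel. x \<in> {\<alpha><..<\<beta>} \<longrightarrow>
         (\<forall>\<eta> \<xi>. ((\<lambda>p. A x (fst p) (snd p) * snd p) has_derivative
                    (\<lambda>h. a_eta x \<eta> \<xi> * fst h + a_xi x \<eta> \<xi> * snd h)) (at (\<eta>, \<xi>)))
       \<and> continuous_on UNIV (\<lambda>p. a_eta x (fst p) (snd p))
       \<and> continuous_on UNIV (\<lambda>p. a_xi x (fst p) (snd p))
       \<and> (\<forall>\<eta>. ((\<lambda>e. b x e) has_real_derivative b_eta x \<eta>) (at \<eta>))
       \<and> continuous_on UNIV (b_eta x)
       \<and> (\<forall>\<eta> \<xi> \<zeta>. a_xi x \<eta> \<xi> * \<zeta> * \<zeta> \<ge> \<gamma>a * \<zeta>\<^sup>2)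
       \<and> (\<forall>\<eta> \<xi>. ((\<lambda>e. A x e \<xi>) has_real_derivative A_eta x \<eta> \<xi>) (at \<eta>)
                 \<and> \<bar>A_eta x \<eta> \<xi>\<bar> \<le> K\<eta>)
       \<and> (\<forall>\<eta>. 0 \<le> b_eta x \<eta> \<and> b_eta x \<eta> \<le> B\<eta>)"
    and sub: "subsolution dirichlet t n A b \<psi>\<alpha> u1"
    and super: "supersolution dirichlet t n A b \<psi>\<alpha> u2"
    and mesh: "Max ((\<lambda>k. \<bar>u2 (t k) - u2 (t (k - 1))\<bar> + B\<eta> / K\<eta> * (t k - t (k - 1))\<^sup>2) ` {1..n})
               < 2 * \<gamma>a / K\<eta>"
  shows "\<forall>x\<in>{\<alpha><..<\<beta>}. u1 x \<le> u2 x"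
proof -
  have n1: "1 \<le> n" and t0: "t 0 = \<alpha>" and tn: "t n = \<beta>"
    and tinc: "\<And>k. k \<in> {1..n} \<Longrightarrow> t (k-1) < t k"
    using subdiv unfolding subdivision_def by auto
  have tlt: "t i < t j" if "i < j" "j \<le> n" for i j
    using that
  proof (induction j)
    case 0 then show ?case by simp
  next
    case (Suc j)
    have step: "t j < t (Suc j)" using tinc[of "Suc j"] Suc.prems by auto
    show ?case
    proof (cases "i = j")
      case True then show ?thesis using step by simp
    next
      case False
      then have "t i < t j" using Suc.IH Suc.prems by simp
      then show ?thesis using step by simp
    qed
  qed
  have tle: "t i \<le> t j" if "i \<le> j" "j \<le> n" for i j
    using tlt[of i j] that by (cases "i = j") auto
  from sub have u1V: "u1 \<in> FEspace dirichlet t n"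
    and subI: "\<And>v. v \<in> FEspace_plus dirichlet t n \<Longrightarrow>
        set_integrable lborel {t 0<..<t n} (integrand A b u1 v) \<and>
        (LINT x:{t 0<..<t n}|lborel. integrand A b u1 v x) \<le> rhs dirichlet t \<psi>\<alpha> v"
    unfolding subsolution_def by auto
  from super have u2V: "u2 \<in> FEspace dirichlet t n"
    and superI: "\<And>v. v \<in> FEspace_plus dirichlet t n \<Longrightarrow>
        set_integrable lborel {t 0<..<t n} (integrand A b u2 v) \<and>
        (LINT x:{t 0<..<t n}|lborel. integrand A b u2 v x) \<ge> rhs dirichlet t \<psi>\<alpha> v"
    unfolding supersolution_def by auto
  have pw1: "pw_linear t n u1" and u1n: "u1 (t n) = 0" and u10: "dirichlet \<Longrightarrow> u1 (t 0) = 0"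
    using u1V unfolding FEspace_def by auto
  have pw2: "pw_linear t n u2" and u2n: "u2 (t n) = 0" and u20: "dirichlet \<Longrightarrow> u2 (t 0) = 0"
    using u2V unfolding FEspace_def by auto
  define w where "w i = u1 (t i) - u2 (t i)" for i
  have meshk: "K\<eta> * \<bar>u2 (t k) - u2 (t (k-1))\<bar> + B\<eta> * (t k - t (k-1))^2 < 2*\<gamma>a"
    if k: "k \<in> {1..n}" for k
  proof -
    let ?f = "\<lambda>k. \<bar>u2 (t k) - u2 (t (k - 1))\<bar> + B\<eta> / K\<eta> * (t k - t (k - 1))\<^sup>2"
    have "?f k \<le> Max (?f ` {1..n})" using k by (intro Max_ge) auto
    then have "?f k < 2 * \<gamma>a / K\<eta>" using mesh by simp
    then have "K\<eta> * ?f k < K\<eta> * (2 * \<gamma>a / K\<eta>)" using constants(2) by (rule mult_strict_left_mono)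
    then show ?thesis using constants(2) by (simp add: algebra_simps)
  qed
  have elem_u: "u x - u' x = w (k-1) + (w k - w (k-1)) / (t k - t (k-1)) * (x - t (k-1))"
    if "u = u1" "u' = u2" "k \<in> {1..n}" "x \<in> {t (k-1)..t k}" for u u' k x
  proof -
    let ?H = "t k - t (k-1)"
    have a: "u1 x = u1 (t (k-1)) + (u1 (t k) - u1 (t (k-1))) / ?H * (x - t (k-1))"
      by (rule pwl_elem[OF pw1 that(3) tinc[OF that(3)] that(4)])
    have b: "u2 x = u2 (t (k-1)) + (u2 (t k) - u2 (t (k-1))) / ?H * (x - t (k-1))"
      by (rule pwl_elem[OF pw2 that(3) tinc[OF that(3)] that(4)])
    have c: "(w k - w (k-1)) / ?H = (u1 (t k) - u1 (t (k-1))) / ?H - (u2 (t k) - u2 (t (k-1))) / ?H"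
      unfolding w_def by (simp add: diff_divide_distrib)
    show ?thesis unfolding that(1,2) a b c by (simp add: w_def algebra_simps)
  qed
  have nodes: "\<forall>i\<le>n. w i \<le> 0"
  proof (rule ccontr)
    assume "\<not> (\<forall>i\<le>n. w i \<le> 0)"
    then obtain j where j: "j \<le> n" "w j > 0" by auto
    have wn: "w n = 0" unfolding w_def using u1n u2n by simp
    have w0: "dirichlet \<Longrightarrow> w 0 = 0" unfolding w_def using u10 u20 by simp
    have jn: "j < n" using j wn by (cases "j = n") auto
    define p where "p = (LEAST i. \<forall>l\<in>{i..j}. 0 < w l)"
    have pP: "\<forall>l\<in>{p..j}. 0 < w l" unfolding p_def by (rule LeastI[of _ j]) (use j in auto)
    have pj: "p \<le> j" unfolding p_def by (rule Least_le) (use j in auto)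
    have pleft: "w (p-1) \<le> 0" if "p > 0"
    proof -
      have "\<not> (\<forall>l\<in>{p-1..j}. 0 < w l)"
      proof
        assume "\<forall>l\<in>{p-1..j}. 0 < w l"
        then have "p \<le> p - 1" unfolding p_def by (rule Least_le)
        then show False using that by simp
      qed
      then obtain l where l: "l \<in> {p-1..j}" "w l \<le> 0" by auto
      have "l = p - 1"
      proof (rule ccontr)
        assume "l \<noteq> p - 1"
        then have "l \<in> {p..j}" using l by auto
        then have "0 < w l" using pP by blast
        then show False using l by simp
      qed
      then show ?thesis using l by simp
    qed
    define q where "q = (LEAST i. j \<le> i \<and> w (Suc i) \<le> 0)"
    have qex: "j \<le> n-1 \<and> w (Suc (n-1)) \<le> 0" using jn wn n1 by simp
    have qP: "j \<le> q \<and> w (Suc q) \<le> 0" unfolding q_def by (rule LeastI[where P="\<lambda>i. j \<le> i \<and> w (Suc i) \<le> 0", OF qex])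
    have qn: "q \<le> n-1" unfolding q_def by (rule Least_le[where P="\<lambda>i. j \<le> i \<and> w (Suc i) \<le> 0", OF qex])
    have qpos: "0 < w l" if l: "l \<in> {j..q}" for l
    proof (cases "l = j")
      case True then show ?thesis using j by simp
    next
      case False
      then obtain l' where l': "l = Suc l'" "j \<le> l'" "l' < q" using l by (cases l) auto
      have "\<not> (j \<le> l' \<and> w (Suc l') \<le> 0)" unfolding q_def
        by (rule not_less_Least) (use l'(3) in \<open>simp add: q_def\<close>)
      then show ?thesis using l' by auto
    qed
    have pos: "0 < w l" if "p \<le> l" "l \<le> q" for l
      using pP qpos that by (cases "l \<le> j") auto
    have pq: "p \<le> q" using pj qP by simp
    have Sqn: "Suc q \<le> n" using qn n1 by simp
    have pdir: "p > 0" if "dirichlet"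
      using pos[of 0] w0[OF that] pq by (cases p) auto
    have mL: "0 \<le> - w (p-1)" if "p > 0" using pleft[OF that] by simp
    have mR: "0 \<le> - w (Suc q)" using qP by simp
    define hL where "hL = t p - t (p-1)"
    define hR where "hR = t (Suc q) - t q"
    have hR: "hR > 0" using tinc[of "Suc q"] Sqn unfolding hR_def by auto
    have hL: "hL > 0" if "p > 0" using tinc[of p] pq Sqn that unfolding hL_def by auto
    define Lf where "Lf x = (if p = 0 then 1 else (x - t (p-1)) / hL)" for x
    define Rf where "Rf x = (t (Suc q) - x) / hR" for x
    define v where "v x = max 0 (min 1 (min (Lf x) (Rf x)))" for x
    have Lge1: "Lf x \<ge> 1" if "t p \<le> x" for x
    proof (cases "p = 0")
      case False
      then have "hL \<le> x - t (p-1)" "hL > 0" using that hL unfolding hL_def by auto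
      then show ?thesis unfolding Lf_def using False by (simp add: le_divide_eq)
    qed (simp add: Lf_def)
    have Lle0: "Lf x \<le> 0" if "p > 0" "x \<le> t (p-1)" for x
      using that hL[OF that(1)] unfolding Lf_def by (simp add: divide_nonpos_pos)
    have Rge1: "Rf x \<ge> 1" if "x \<le> t q" for x
    proof -
      have "hR \<le> t (Suc q) - x" using that unfolding hR_def by simp
      then show ?thesis unfolding Rf_def using hR by (simp add: le_divide_eq)
    qed
    have Rle0: "Rf x \<le> 0" if "t (Suc q) \<le> x" for x
      using that hR unfolding Rf_def by (simp add: divide_nonpos_pos)
    have vt: "v (t i) = (if p \<le> i \<and> i \<le> q then 1 else 0)" if i: "i \<le> n" for i
    proof -
      consider "i < p" | "p \<le> i \<and> i \<le> q" | "q < i" by linarith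
      then show ?thesis
      proof cases
        case 1
        then have "t i \<le> t (p-1)" using tle[of i "p-1"] pq Sqn by auto
        then have "Lf (t i) \<le> 0" using Lle0 1 by auto
        then show ?thesis using 1 unfolding v_def by auto
      next
        case 2
        then have "Lf (t i) \<ge> 1" "Rf (t i) \<ge> 1"
          using Lge1 Rge1 tle[of p i] tle[of i q] Sqn by auto
        then show ?thesis using 2 unfolding v_def by auto
      next
        case 3
        then have "Rf (t i) \<le> 0" using Rle0 tle[of "Suc q" i] i by auto
        then show ?thesis using 3 unfolding v_def by auto
      qed
    qed
    have velem: "v x = v (t (k-1)) + (v (t k) - v (t (k-1))) / (t k - t (k-1)) * (x - t (k-1))"
      if k: "k \<in> {1..n}" and x: "x \<in> {t (k-1)..t k}" for k x
    proof -
      have kn: "k - 1 \<le> n" "k \<le> n" using k by auto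
      consider "k < p" | "k = p" | "p < k \<and> k \<le> q" | "k = Suc q" | "Suc q < k" by linarith
      then show ?thesis
      proof cases
        case 1
        then have "k \<le> p - 1" "p - 1 \<le> n" using pq Sqn by auto
        then have "x \<le> t (p-1)" using x tle[of k "p-1"] by auto
        then have "Lf x \<le> 0" using Lle0 1 by auto
        then have "v x = 0" unfolding v_def by auto
        then show ?thesis using vt[OF kn(1)] vt[OF kn(2)] 1 by auto
      next
        case 2
        then have p0: "p > 0" using k by auto
        have "x \<le> t q" using x 2 tle[of p q] pq Sqn by auto
        then have R: "Rf x \<ge> 1" by (rule Rge1)
        have L: "0 \<le> Lf x" "Lf x \<le> 1" "Lf x = (x - t (k-1)) / (t k - t (k-1))"
          using x p0 hL[OF p0] 2 unfolding Lf_def hL_def by (auto simp: divide_le_eq_1)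
        have "v x = Lf x" using R L unfolding v_def by auto
        then show ?thesis using vt[OF kn(1)] vt[OF kn(2)] 2 p0 L(3) pq by auto
      next
        case 3
        then have "p \<le> k - 1" "k - 1 \<le> n" "k \<le> q" "q \<le> n" using Sqn by auto
        then have "t p \<le> x" "x \<le> t q" using x tle[of p "k-1"] tle[of k q] by auto
        then have "Lf x \<ge> 1" "Rf x \<ge> 1" using Lge1 Rge1 by auto
        then have "v x = 1" unfolding v_def by auto
        then show ?thesis using vt[OF kn(1)] vt[OF kn(2)] 3 by auto
      next
        case 4
        have "t p \<le> x" using x 4 tle[of p q] pq Sqn by auto
        then have L: "Lf x \<ge> 1" by (rule Lge1)
        have R: "0 \<le> Rf x" "Rf x \<le> 1" "Rf x = 1 + (0 - 1) / (t k - t (k-1)) * (x - t (k-1))"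
          using x hR 4 unfolding Rf_def hR_def by (auto simp: divide_le_eq_1 field_simps)
        have "v x = Rf x" using R L unfolding v_def by auto
        then show ?thesis using vt[OF kn(1)] vt[OF kn(2)] 4 R(3) pq by auto
      next
        case 5
        then have "Suc q \<le> k - 1" by simp
        then have "t (Suc q) \<le> x" using x tle[of "Suc q" "k-1"] kn by auto
        then have "Rf x \<le> 0" by (rule Rle0)
        then have "v x = 0" unfolding v_def by auto
        then show ?thesis using vt[OF kn(1)] vt[OF kn(2)] 5 by auto
      qed
    qed
    have contL: "continuous_on UNIV Lf"
    proof (cases "p = 0")
      case False
      then have "hL \<noteq> 0" using hL by auto
      then show ?thesis using False by (auto simp: Lf_def intro!: continuous_intros)
    qed (auto simp: Lf_def)
    have contv: "continuous_on UNIV v"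
      unfolding v_def Rf_def using hR by (intro continuous_intros contL) auto
    have pwv: "pw_linear t n v"
      unfolding pw_linear_def
    proof (intro conjI ballI)
      show "continuous_on {t 0..t n} v" using contv by (rule continuous_on_subset) simp
      fix k assume k: "k \<in> {1..n}"
      define D where "D = (v (t k) - v (t (k-1))) / (t k - t (k-1))"
      show "\<exists>c d. \<forall>x\<in>{t (k - 1)..t k}. v x = c + d * x"
      proof (intro exI ballI)
        fix x assume x: "x \<in> {t (k - 1)..t k}"
        show "v x = (v (t (k-1)) - D * t (k-1)) + D * x"
          using velem[OF k x] unfolding D_def[symmetric] by (simp add: right_diff_distrib)
      qed
    qed
    have vn: "v (t n) = 0" using vt[of n] Sqn by simp
    have v0: "v (t 0) = 0" if "dirichlet" using vt[of 0] pdir[OF that] by simp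
    have vnn: "\<forall>x\<in>{t 0..t n}. 0 \<le> v x" unfolding v_def by simp
    have vV: "v \<in> FEspace_plus dirichlet t n"
      unfolding FEspace_plus_def FEspace_def using pwv vn v0 vnn by blast
    obtain int1: "set_integrable lborel {t 0<..<t n} (integrand A b u1 v)"
        and le1: "(LINT x:{t 0<..<t n}|lborel. integrand A b u1 v x) \<le> rhs dirichlet t \<psi>\<alpha> v"
      using subI[OF vV] by blast
    obtain int2: "set_integrable lborel {t 0<..<t n} (integrand A b u2 v)"
        and ge2: "(LINT x:{t 0<..<t n}|lborel. integrand A b u2 v x) \<ge> rhs dirichlet t \<psi>\<alpha> v"
      using superI[OF vV] by blast
    define G where "G x = integrand A b u1 v x - integrand A b u2 v x" for x
    have Gint: "set_integrable lborel {t 0<..<t n} G"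
      unfolding G_def by (rule set_integral_diff(1)[OF int1 int2])
    have Gle: "(LINT x:{t 0<..<t n}|lborel. G x) \<le> 0"
      unfolding G_def using set_integral_diff(2)[OF int1 int2] le1 ge2 by simp
    define DL where "DL = \<bar>u2 (t p) - u2 (t (p-1))\<bar>"
    define DR where "DR = \<bar>u2 (t (Suc q)) - u2 (t q)\<bar>"
    define gL where "gL x = (\<gamma>a*(- w (p-1) + w p)/hL - K\<eta>*(DL/hL)*((1 - (x - t (p-1))/hL)*(- w (p-1))
       + (x - t (p-1))/hL * w p))/hL - B\<eta>*(- w (p-1) + w p)/4" for x
    define gR where "gR x = (\<gamma>a*(w q + - w (Suc q))/hR - K\<eta>*(DR/hR)*((1 - (x - t q)/hR)*w q
       + (x - t q)/hR * (- w (Suc q))))/hR - B\<eta>*(w q + - w (Suc q))/4" for x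
    define IL where "IL = {t (p-1)<..<t p}"
    define IR where "IR = {t q<..<t (Suc q)}"
    define g where "g x = indicator IL x * gL x + indicator IR x * gR x" for x
    have IRsub: "IR \<subseteq> {t 0<..<t n}" unfolding IR_def using tle[of 0 q] tle[of "Suc q" n] Sqn by auto
    have ILsub: "IL \<subseteq> {t 0<..<t n}" unfolding IL_def
    proof -
      have "p - 1 \<le> n" "p \<le> n" using pq Sqn by auto
      then show "{t (p-1)<..<t p} \<subseteq> {t 0<..<t n}" using tle[of 0 "p-1"] tle[of p n] by auto
    qed
    have tqs: "t q < t (Suc q)" using hR unfolding hR_def by simp
    note iR = int_shape[OF tqs hR_def, where ca="\<gamma>a*(w q + - w (Suc q))/hR" and cb="K\<eta>*(DR/hR)"
       and cc="B\<eta>*(w q + - w (Suc q))/4" and m="w q" and wp="- w (Suc q)"]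
    have intR: "set_integrable lborel IR gR" using iR(1) unfolding IR_def gR_def .
    have "(LINT x:IR|lborel. gR x) = \<gamma>a*(w q + - w (Suc q))/hR - K\<eta>*(DR/hR)*(w q + - w (Suc q))/2
        - B\<eta>*(w q + - w (Suc q))/4*hR" using iR(2) unfolding IR_def gR_def .
    also have "\<dots> > 0"
    proof (rule pos_val)
      show "hR > 0" by (rule hR)
      show "w q + - w (Suc q) > 0" using pos[of q] pq mR by simp
      show "K\<eta> * DR + B\<eta> * hR\<^sup>2 < 2 * \<gamma>a" using meshk[of "Suc q"] Sqn unfolding DR_def hR_def by simp
      show "B\<eta> \<ge> 0" by (rule constants(3))
    qed
    finally have valR: "(LINT x:IR|lborel. gR x) > 0" .
    have intvalL: "set_integrable lborel IL gL \<and> (LINT x:IL|lborel. gL x) \<ge> 0"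
    proof (cases "p = 0")
      case True
      then have "IL = {}" unfolding IL_def by simp
      then show ?thesis
        by (simp add: set_integrable_def set_lebesgue_integral_def)
    next
      case False
      then have p0: "p > 0" by simp
      have tp: "t (p-1) < t p" using hL[OF p0] unfolding hL_def by simp
      note iL = int_shape[OF tp hL_def, where ca="\<gamma>a*(- w (p-1) + w p)/hL" and cb="K\<eta>*(DL/hL)"
         and cc="B\<eta>*(- w (p-1) + w p)/4" and m="- w (p-1)" and wp="w p"]
      have i1: "set_integrable lborel IL gL" using iL(1) unfolding IL_def gL_def .
      have "(LINT x:IL|lborel. gL x) = \<gamma>a*(- w (p-1) + w p)/hL - K\<eta>*(DL/hL)*(- w (p-1) + w p)/2
          - B\<eta>*(- w (p-1) + w p)/4*hL" using iL(2) unfolding IL_def gL_def .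
      also have "\<dots> > 0"
      proof (rule pos_val)
        show "hL > 0" by (rule hL[OF p0])
        show "- w (p-1) + w p > 0" using pos[of p] pq mL[OF p0] by simp
        have "p \<in> {1..n}" using p0 pq Sqn by auto
        then show "K\<eta> * DL + B\<eta> * hL\<^sup>2 < 2 * \<gamma>a" using meshk[of p] unfolding DL_def hL_def by simp
        show "B\<eta> \<ge> 0" by (rule constants(3))
      qed
      finally show ?thesis using i1 by simp
    qed
    have intL: "set_integrable lborel IL gL" and valL: "(LINT x:IL|lborel. gL x) \<ge> 0"
      using intvalL by auto
    have gint: "set_integrable lborel {t 0<..<t n} g"
      unfolding g_def by (rule set_integral_add(1)[OF ind_sub(1)[OF ILsub intL] ind_sub(1)[OF IRsub intR]])
    have gval: "(LINT x:{t 0<..<t n}|lborel. g x) = (LINT x:IL|lborel. gL x) + (LINT x:IR|lborel. gR x)"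
      unfolding g_def set_integral_add(2)[OF ind_sub(1)[OF ILsub intL] ind_sub(1)[OF IRsub intR]]
        ind_sub(2)[OF ILsub intL] ind_sub(2)[OF IRsub intR] ..
    have AEg: "AE x in lborel. x \<in> {t 0<..<t n} \<longrightarrow> g x \<le> G x"
    proof -
      have AEn: "AE x in lborel. \<forall>i\<in>{..n}. x \<noteq> t i"
        by (rule AE_finite_allI) (auto intro: AE_lborel_singleton)
      show ?thesis using reg AEn
      proof eventually_elim
        case (elim x)
        show ?case
        proof
          assume xI: "x \<in> {t 0<..<t n}"
          then have xab: "x \<in> {\<alpha><..<\<beta>}" using t0 tn by simp
          note RR = mp[OF elim(1) xab]
          note RP = reg_pt[where A=A and b=b and x=x and a_eta=a_eta and a_xi=a_xi and A_eta=A_eta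
            and b_eta=b_eta, OF RR[THEN conjunct1]
            RR[THEN conjunct2, THEN conjunct2, THEN conjunct2, THEN conjunct2, THEN conjunct2, THEN conjunct1]
            RR[THEN conjunct2, THEN conjunct2, THEN conjunct2, THEN conjunct2, THEN conjunct2, THEN conjunct2, THEN conjunct1]
            RR[THEN conjunct2, THEN conjunct2, THEN conjunct2, THEN conjunct1]
            RR[THEN conjunct2, THEN conjunct2, THEN conjunct2, THEN conjunct2, THEN conjunct2, THEN conjunct2, THEN conjunct2]]
          obtain k where k: "1 \<le> k" "k \<le> n" "t (k-1) < x" "x \<le> t k"
            using elem_find[of t x n] xI by auto
          have "x \<noteq> t k" using k(2) elim(2) by auto
          then have xk: "x < t k" using k(4) by simp
          have k': "k \<in> {1..n}" using k by auto
          have xo: "x \<in> {t (k-1)<..<t k}" using k xk by auto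
          have xc: "x \<in> {t (k-1)..t k}" using xo by auto
          define H where "H = t k - t (k-1)"
          have H: "H > 0" using tinc[OF k'] unfolding H_def by simp
          define d1 where "d1 = (u1 (t k) - u1 (t (k-1))) / H"
          define d2 where "d2 = (u2 (t k) - u2 (t (k-1))) / H"
          define dv where "dv = (v (t k) - v (t (k-1))) / H"
          have D1: "deriv u1 x = d1" unfolding d1_def H_def by (rule pwl_deriv[OF pw1 k' tinc[OF k'] xo])
          have D2: "deriv u2 x = d2" unfolding d2_def H_def by (rule pwl_deriv[OF pw2 k' tinc[OF k'] xo])
          have DV: "deriv v x = dv" unfolding dv_def H_def by (rule pwl_deriv[OF pwv k' tinc[OF k'] xo])
          have Gx: "G x = (A x (u1 x) d1 * d1 - A x (u2 x) d2 * d2) * dv + (b x (u1 x) - b x (u2 x)) * v x"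
            unfolding G_def integrand_def D1 D2 DV by (simp add: algebra_simps)
          define s where "s = (x - t (k-1)) / H"
          have s: "0 \<le> s" "s \<le> 1" using xc H unfolding s_def H_def by (auto simp: divide_le_eq_1)
          have vx: "v x = v (t (k-1)) + dv * (x - t (k-1))"
            using velem[OF k' xc] unfolding dv_def H_def .
          have vxs: "v x = v (t (k-1)) + (v (t k) - v (t (k-1))) * s"
            unfolding vx dv_def s_def by simp
          have ex: "u1 x - u2 x = w (k-1) + (w k - w (k-1)) * s"
            using elem_u[OF refl refl k' xc] unfolding s_def H_def by simp
          have d12: "d1 - d2 = (w k - w (k-1)) / H" unfolding d1_def d2_def w_def by (simp add: diff_divide_distrib)
          have kn: "k-1 \<le> n" "k \<le> n" using k by auto
          consider "k < p" | "k = p" | "p < k \<and> k \<le> q" | "k = Suc q" | "Suc q < k" by linarith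
          then show "g x \<le> G x"
          proof cases
            case 1
            have "v (t (k-1)) = 0" "v (t k) = 0" using vt[OF kn(1)] vt[OF kn(2)] 1 by auto
            then have "dv = 0" "v x = 0" using vx unfolding dv_def by auto
            then have "G x = 0" using Gx by simp
            moreover have "k \<le> p - 1" "p - 1 \<le> n" "p - 1 \<le> q" "q \<le> n" using 1 pq Sqn by auto
            then have "x \<notin> IL" "x \<notin> IR" using xk tle[of k "p-1"] tle[of "p-1" q] unfolding IL_def IR_def by auto
            ultimately show ?thesis unfolding g_def by simp
          next
            case 5
            have "v (t (k-1)) = 0" "v (t k) = 0" using vt[OF kn(1)] vt[OF kn(2)] 5 by auto
            then have "dv = 0" "v x = 0" using vx unfolding dv_def by auto
            then have "G x = 0" using Gx by simp
            moreover have "Suc q \<le> k - 1" "p \<le> Suc q" using 5 pq by auto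
            then have "x \<notin> IL" "x \<notin> IR" using k(3) tle[of "Suc q" "k-1"] tle[of p "Suc q"] kn Sqn
              unfolding IL_def IR_def by auto
            ultimately show ?thesis unfolding g_def by simp
          next
            case 3
            have "v (t (k-1)) = 1" "v (t k) = 1" using vt[OF kn(1)] vt[OF kn(2)] 3 by auto
            then have "dv = 0" "v x = 1" using vx unfolding dv_def by auto
            then have G1: "G x = b x (u1 x) - b x (u2 x)" using Gx by simp
            have "0 < w (k-1)" "0 < w k" using pos 3 by auto
            then have "0 \<le> (1 - s) * w (k-1)" "0 \<le> s * w k" using s by auto
            moreover have "u1 x - u2 x = (1 - s) * w (k-1) + s * w k" using ex by (simp add: algebra_simps)
            ultimately have "u2 x \<le> u1 x" by linarith
            then have "G x \<ge> 0" using RP(3) G1 by simp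
            moreover have "p \<le> k - 1" "k \<le> q" using 3 by auto
            then have "x \<notin> IL" "x \<notin> IR" using k(3) xk tle[of p "k-1"] tle[of k q] kn Sqn
              unfolding IL_def IR_def by auto
            ultimately show ?thesis unfolding g_def by simp
          next
            case 2
            then have p0: "p > 0" using k by simp
            have HL: "H = hL" unfolding H_def hL_def 2 ..
            have "v (t (k-1)) = 0" "v (t k) = 1" using vt[OF kn(1)] vt[OF kn(2)] 2 p0 pq by auto
            then have dv1: "dv = 1/hL" and vs: "v x = s" using vxs unfolding dv_def HL by auto
            have e: "u1 x - u2 x = -(1-s)*(- w (p-1)) + s * w p" using ex 2 by (simp add: algebra_simps)
            have d: "d1 - d2 = 1 * (- w (p-1) + w p) / hL" using d12 2 HL by simp
            have sg: "(1::real) = 1 \<or> (1::real) = -1" by simp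
            have est: "(A x (u1 x) d1 * d1 - A x (u2 x) d2 * d2) * (1/hL) + (b x (u1 x) - b x (u2 x)) * s
              \<ge> (\<gamma>a*(- w (p-1) + w p)/hL - K\<eta>*\<bar>d2\<bar>*((1-s)*(- w (p-1)) + s*w p))/hL
                 - B\<eta>*(- w (p-1) + w p)/4"
              by (rule pt_est[OF RP(1) RP(2) RP(3) RP(4) hL[OF p0] s sg mL[OF p0] pos[of p] e d
                    constants(3) less_imp_le[OF constants(2)]]) (use pq in auto)
            have ad2: "\<bar>d2\<bar> = DL/hL" unfolding d2_def DL_def HL using 2 hL[OF p0] by simp
            have "x \<in> IL" using xo 2 unfolding IL_def by simp
            moreover have "x \<notin> IR" using xk 2 tle[of p q] pq Sqn unfolding IR_def by auto
            ultimately have "g x = gL x" unfolding g_def by simp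
            also have "\<dots> = (\<gamma>a*(- w (p-1) + w p)/hL - K\<eta>*\<bar>d2\<bar>*((1-s)*(- w (p-1)) + s*w p))/hL
                 - B\<eta>*(- w (p-1) + w p)/4"
              unfolding gL_def ad2 s_def HL 2 ..
            also have "\<dots> \<le> G x" using est Gx dv1 vs by simp
            finally show ?thesis .
          next
            case 4
            have HR: "H = hR" unfolding H_def hR_def 4 by simp
            have "v (t (k-1)) = 1" "v (t k) = 0" using vt[OF kn(1)] vt[OF kn(2)] 4 pq by auto
            then have dv1: "dv = -1/hR" and vs: "v x = 1 - s" using vxs unfolding dv_def HR by auto
            have e: "u1 x - u2 x = -(1-(1-s))*(- w (Suc q)) + (1-s) * w q" using ex 4 by (simp add: algebra_simps)
            have d: "d1 - d2 = -1 * (- w (Suc q) + w q) / hR" using d12 4 HR by simp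
            have sg: "(-1::real) = 1 \<or> (-1::real) = -1" by simp
            have s': "0 \<le> 1 - s" "1 - s \<le> 1" using s by auto
            have est: "(A x (u1 x) d1 * d1 - A x (u2 x) d2 * d2) * (-1/hR) + (b x (u1 x) - b x (u2 x)) * (1-s)
              \<ge> (\<gamma>a*(- w (Suc q) + w q)/hR - K\<eta>*\<bar>d2\<bar>*((1-(1-s))*(- w (Suc q)) + (1-s)*w q))/hR
                 - B\<eta>*(- w (Suc q) + w q)/4"
              by (rule pt_est[OF RP(1) RP(2) RP(3) RP(4) hR s' sg mR pos[of q] e d
                    constants(3) less_imp_le[OF constants(2)]]) (use pq in auto)
            have ad2: "\<bar>d2\<bar> = DR/hR" unfolding d2_def DR_def HR using 4 hR by simp
            have "x \<in> IR" using xo 4 unfolding IR_def by simp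
            moreover have "x \<notin> IL" using k(3) 4 tle[of p q] pq Sqn unfolding IL_def by auto
            ultimately have "g x = gR x" unfolding g_def by simp
            also have "\<dots> = (\<gamma>a*(- w (Suc q) + w q)/hR - K\<eta>*\<bar>d2\<bar>*((1-(1-s))*(- w (Suc q)) + (1-s)*w q))/hR
                 - B\<eta>*(- w (Suc q) + w q)/4"
              unfolding gR_def ad2 s_def HR 4 by (simp add: algebra_simps)
            also have "\<dots> \<le> G x" using est Gx dv1 vs by simp
            finally show ?thesis .
          qed
        qed
      qed
    qed
    have "(LINT x:{t 0<..<t n}|lborel. g x) \<le> (LINT x:{t 0<..<t n}|lborel. G x)"
      by (rule set_integral_mono_AE[OF gint Gint AEg])
    then show False using gval valL valR Gle by linarith
  qed
  show ?thesis
  proof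
    fix x assume x: "x \<in> {\<alpha><..<\<beta>}"
    then obtain k where k: "1 \<le> k" "k \<le> n" "t (k-1) < x" "x \<le> t k"
      using elem_find[of t x n] t0 tn by auto
    have k': "k \<in> {1..n}" using k by auto
    have hk: "t (k-1) < t k" using tinc[OF k'] .
    have e: "u1 x - u2 x = w (k-1) + (w k - w (k-1)) / (t k - t (k-1)) * (x - t (k-1))"
      by (rule elem_u) (use k' k in auto)
    define s where "s = (x - t (k-1)) / (t k - t (k-1))"
    have s: "0 \<le> s" "s \<le> 1" using k hk unfolding s_def by (auto simp: divide_le_eq_1)
    have e2: "u1 x - u2 x = (1 - s) * w (k-1) + s * w k"
    proof -
      have "(w k - w (k-1)) / (t k - t (k-1)) * (x - t (k-1)) = (w k - w (k-1)) * s"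
        unfolding s_def by simp
      then show ?thesis unfolding e by (simp add: algebra_simps)
    qed
    have "(1 - s) * w (k-1) \<le> 0" "s * w k \<le> 0"
      using nodes k s by (auto intro: mult_nonneg_nonpos)
    then show "u1 x \<le> u2 x" using e2 by linarith
  qed
qed

end
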